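(* Let $Y$ be a continuous random variable supported on $[0,\infty)$ whose density $f$ satisfies $f(t)\le Ce^{-\lambda t}$ for all $t\ge0$, for some $C,\lambda>0$. There exist constants $S,\delta>0$, depending only on $C,\lambda$, such that $|\mathbb{E}[e^{-sY}]-1| \ge \delta|s|$ for all complex $s$ with $|s|\le S$. *)

theory Defs
  imports "HOL-Probability.Probability"
begin

end

theory Submission
  imports Defs
begin

lemma exp_rem:
  fixes z :: complex
  shows "norm (exp z - 1 - z) \<le> norm z ^ 2 * exp (norm z)"
proof -
  have "norm (exp z - (\<Sum>i\<le>1. z ^ i / fact i)) \<le> exp (norm z) * (norm z ^ Suc 1) / fact 1"
    by (rule Taylor_exp_field)
  then show ?thesis by (simp add: algebra_simps numeral_2_eq_2)
qed

lemma main: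
  fixes f :: "real \<Rightarrow> real" and C lam :: real and s :: complex
  assumes C: "C > 0" and lam: "lam > 0"
    and fm: "f \<in> borel_measurable borel" and nn: "\<forall>t. 0 \<le> f t" and neg: "\<forall>t<0. f t = 0"
    and one: "(\<integral>\<^sup>+ t. ennreal (f t) \<partial>lborel) = 1"
    and bnd: "\<forall>t\<ge>0. f t \<le> C * exp (- lam * t)"
    and s: "cmod s \<le> lam / 2"
  shows "cmod ((\<integral>t. exp (- (s * complex_of_real t)) \<partial>(density lborel (\<lambda>t. ennreal (f t)))) - 1)
           \<ge> cmod s * (1 / (4*C)) - cmod s ^ 2 * (4 * (C * (1 + 64 / lam^2)) / lam)"
proof -
  define M where "M = density lborel (\<lambda>t. ennreal (f t))"
  define K where "K = 4 * (C * (1 + 64 / lam^2)) / lam"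
  define h where "h = (\<lambda>y::real. (1 + y^2) * exp (lam/2 * \<bar>y\<bar>))"
  have K0: "K > 0" unfolding K_def using C lam by (simp add: add_pos_nonneg)
  have fm': "f \<in> borel_measurable lborel" using fm by simp
  have sM[simp, measurable_cong]: "sets M = sets borel" unfolding M_def by simp
  have spM[simp]: "space M = UNIV" unfolding M_def by simp
  have prob: "prob_space M"
    apply (rule prob_spaceI) unfolding M_def using one fm by (subst emeasure_density) auto
  then interpret P: prob_space M .
  have hm[measurable]: "h \<in> borel_measurable borel" unfolding h_def by measurable
  have h0: "0 \<le> h y" for y unfolding h_def by simp
  have pw: "f y * h y \<le> K * exponential_density (lam/4) y" for y
  proof (cases "y < 0")
    case True then show ?thesis using neg lam C by (simp add: K_def exponential_density_def)
  next
    case False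
    then have y: "y \<ge> 0" by simp
    have e1: "y * (lam/8) \<le> exp (lam/8 * y)"
    proof -
      have "lam/8*y \<le> exp (lam/8*y)" using exp_ge_add_one_self[of "lam/8*y"] by linarith
      then show ?thesis by (simp add: mult.commute)
    qed
    have "(y*(lam/8))^2 \<le> (exp (lam/8*y))^2"
      using e1 y lam by (intro power_mono) auto
    also have "(exp (lam/8*y))^2 = exp (lam/4*y)"
      by (simp add: exp_double[symmetric] power2_eq_square exp_add[symmetric])
    finally have "y^2 * (lam^2/64) \<le> exp (lam/4*y)" by (simp add: power_mult_distrib power_divide)
    hence y2: "y^2 \<le> 64/lam^2 * exp (lam/4 * y)" using lam by (simp add: field_simps)
    have fy: "f y \<le> C * exp (-lam*y)" using bnd y by simp
    have "f y * h y \<le> C * exp (-lam*y) * ((1 + y^2) * exp (lam/2*y))"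
    proof -
      have "h y = (1+y^2)*exp(lam/2*y)" unfolding h_def using y by simp
      then show ?thesis using fy by (simp add: mult_right_mono)
    qed
    also have "exp (-lam*y) * exp (lam/2*y) = exp (-(lam/2)*y)"
      by (simp add: exp_add[symmetric])
    hence "C * exp (-lam*y) * ((1 + y^2) * exp (lam/2*y)) = C * (1+y^2) * exp (-(lam/2)*y)"
      by (simp add: algebra_simps)
    also have "C * (1+y^2) * exp (-(lam/2)*y) \<le> C * (1 + 64/lam^2 * exp (lam/4*y)) * exp (-(lam/2)*y)"
      using y2 C by (intro mult_right_mono mult_left_mono) auto
    also have "exp (lam/4*y) * exp (-(lam/2)*y) = exp (-(lam/4)*y)"
      by (simp add: exp_add[symmetric])
    hence "C * (1 + 64/lam^2 * exp (lam/4*y)) * exp (-(lam/2)*y)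
        = C * (exp(-(lam/2)*y) + 64/lam^2 * exp(-(lam/4)*y))"
      by (simp add: algebra_simps)
    also have "exp(-(lam/2)*y) \<le> exp(-(lam/4)*y)" using y lam by simp
    hence "C * (exp(-(lam/2)*y) + 64/lam^2 * exp(-(lam/4)*y)) \<le> C * (1 + 64/lam^2) * exp(-(lam/4)*y)"
      using C by (simp add: algebra_simps)
    also have "C * (1 + 64/lam^2) * exp(-(lam/4)*y) = K * exponential_density (lam/4) y"
      using y lam by (simp add: K_def exponential_density_def mult.commute)
    finally show ?thesis .
  qed
  have edm[measurable]: "exponential_density (lam/4) \<in> borel_measurable borel"
    unfolding exponential_density_def by measurable
  have ed1: "(\<integral>\<^sup>+ y. ennreal (exponential_density (lam/4) y) \<partial>lborel) = 1"
    using prob_space.emeasure_space_1[OF prob_space_exponential_density[of "lam/4"]] lam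
    by (simp add: emeasure_density)
  have nnK: "(\<integral>\<^sup>+ y. ennreal (f y * h y) \<partial>lborel) \<le> ennreal K"
  proof -
    have "(\<integral>\<^sup>+ y. ennreal (f y * h y) \<partial>lborel)
        \<le> (\<integral>\<^sup>+ y. ennreal K * ennreal (exponential_density (lam/4) y) \<partial>lborel)"
      apply (rule nn_integral_mono)
      using pw K0 lam by (simp add: ennreal_mult[symmetric] ennreal_leI exponential_density_nonneg)
    also have "\<dots> = ennreal K" by (simp add: nn_integral_cmult ed1)
    finally show ?thesis .
  qed
  have hintl: "integrable lborel (\<lambda>y. f y * h y)"
    apply (rule integrableI_bounded)
    using fm' apply measurable
    using nnK nn h0 by (simp add: abs_mult order_le_less_trans)
  have hint: "integrable M h"
    unfolding M_def using hintl fm nn by (subst integrable_density) auto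
  have Eh: "P.expectation h \<le> K"
  proof -
    have "ennreal (integral\<^sup>L M h) = (\<integral>\<^sup>+ y. ennreal (h y) \<partial>M)"
      by (rule nn_integral_eq_integral[symmetric]) (use hint h0 in auto)
    also have "\<dots> = (\<integral>\<^sup>+ y. ennreal (f y) * ennreal (h y) \<partial>lborel)"
      unfolding M_def by (rule nn_integral_density) (use fm nn in auto)
    also have "\<dots> = (\<integral>\<^sup>+ y. ennreal (f y * h y) \<partial>lborel)"
      using nn h0 by (simp add: ennreal_mult)
    also have "\<dots> \<le> ennreal K" by (rule nnK)
    finally show ?thesis using K0 by (simp add: ennreal_le_iff)
  qed
  have absh: "\<bar>y\<bar> \<le> h y" for y
  proof -
    have "0 \<le> (\<bar>y\<bar> - 1)^2" by simp
    hence "2*\<bar>y\<bar> \<le> 1 + \<bar>y\<bar>*\<bar>y\<bar>" by (simp add: power2_eq_square algebra_simps)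
    hence "\<bar>y\<bar> \<le> 1 + y^2" by (simp add: abs_mult_self_eq power2_eq_square)
    also have "\<dots> \<le> (1 + y^2) * exp (lam/2 * \<bar>y\<bar>)"
    proof -
      have "1 \<le> exp (lam/2 * \<bar>y\<bar>)" using lam by simp
      from mult_left_mono[OF this, of "1 + y^2"] show ?thesis by simp
    qed
    finally show ?thesis unfolding h_def .
  qed
  have Yint: "integrable M (\<lambda>y. y)"
    by (rule Bochner_Integration.integrable_bound[OF hint]) (auto simp: absh h0 abs_of_nonneg intro!: AE_I2)
  define a where "a = 1/(2*C)"
  have a0: "a > 0" unfolding a_def using C by simp
  have EY: "P.expectation (\<lambda>y. y) \<ge> 1/(4*C)"
  proof -
    have e: "P.expectation (\<lambda>y. y) = integral\<^sup>L lborel (\<lambda>y. f y * y)"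
      unfolding M_def by (subst integral_density) (use fm nn in auto)
    have intfy: "integrable lborel (\<lambda>y. f y * y)"
      using Yint fm nn unfolding M_def by (subst (asm) integrable_density) auto
    have intf: "integrable lborel f"
      apply (rule integrableI_bounded) using fm' apply simp using one nn by simp
    have If: "integral\<^sup>L lborel f = 1"
      using nn_integral_eq_integral[OF intf] one nn by simp
    have intind: "integrable lborel (indicator {0..a} :: real \<Rightarrow> real)"
      by (rule integrable_real_indicator) (use a0 in \<open>auto simp: emeasure_lborel_Icc\<close>)
    have "integral\<^sup>L lborel (\<lambda>y. a * f y - a*C * indicator {0..a} y) \<le> integral\<^sup>L lborel (\<lambda>y. f y * y)"
    proof (rule integral_mono)
      show "integrable lborel (\<lambda>y. a * f y - a*C * indicator {0..a} y)"
        using intf intind by auto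
      show "integrable lborel (\<lambda>y. f y * y)" by (rule intfy)
      fix y :: real
      show "a * f y - a*C * indicator {0..a} y \<le> f y * y"
      proof (cases "y < 0")
        case True then show ?thesis using neg by simp
      next
        case False
        show ?thesis
        proof (cases "y \<le> a")
          case True
          have e: "exp (-lam*y) \<le> 1" using False lam by simp
          have "C * exp (-lam*y) \<le> C" using mult_left_le[OF e] C by simp
          moreover have "f y \<le> C * exp (-lam*y)" using bnd False by simp
          ultimately have fC: "f y \<le> C" by linarith
          have "(a - y) * f y \<le> a * C" using True False fC nn a0
            by (intro mult_mono) auto
          then show ?thesis using True False by (simp add: algebra_simps)
        next
          case False2: False
          then have "a * f y \<le> y * f y" using nn by (intro mult_right_mono) auto
          then show ?thesis using False2 by (simp add: mult.commute)
        qed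
      qed
    qed
    moreover have "integral\<^sup>L lborel (\<lambda>y. a * f y - a*C * indicator {0..a} y) = a - a*C*a"
      using intf intind If a0 by (simp add: Bochner_Integration.integral_diff)
    moreover have "a - a*C*a = 1/(4*C)" unfolding a_def using C by (simp add: field_simps)
    ultimately show ?thesis using e by simp
  qed
  define R where "R = (\<lambda>t::real. exp (- (s * of_real t)) - 1 - (- (s * of_real t)))"
  have Rb: "norm (R t) \<le> cmod s ^ 2 * h t" for t
  proof -
    have "norm (R t) \<le> norm (-(s * of_real t)) ^ 2 * exp (norm (-(s * of_real t)))"
      unfolding R_def by (rule exp_rem)
    also have "\<dots> = cmod s ^ 2 * t^2 * exp (cmod s * \<bar>t\<bar>)"
      by (simp add: norm_mult power_mult_distrib)
    also have "\<dots> \<le> cmod s ^ 2 * ((1 + t^2) * exp (lam/2 * \<bar>t\<bar>))"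
    proof -
      have "exp (cmod s * \<bar>t\<bar>) \<le> exp (lam/2 * \<bar>t\<bar>)"
        using mult_right_mono[OF s, of "\<bar>t\<bar>"] by (simp add: mult_ac)
      then have "t^2 * exp (cmod s * \<bar>t\<bar>) \<le> (1 + t^2) * exp (lam/2 * \<bar>t\<bar>)"
        by (intro mult_mono) auto
      then show ?thesis by (simp add: mult_left_mono mult.assoc)
    qed
    finally show ?thesis unfolding h_def by simp
  qed
  have Rm[measurable]: "R \<in> borel_measurable borel" unfolding R_def by measurable
  have Rint: "integrable M R"
    by (rule Bochner_Integration.integrable_bound[of _ "\<lambda>t. cmod s ^ 2 * h t"])
       (use hint Rb h0 in \<open>auto intro!: AE_I2 simp: abs_mult abs_of_nonneg\<close>)
  have sYint: "integrable M (\<lambda>t. s * of_real t)"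
    using Yint by auto
  have expeq: "(\<lambda>t. exp (- (s * complex_of_real t))) = (\<lambda>t. R t + 1 - s * of_real t)"
    unfolding R_def by (auto simp: algebra_simps)
  have eq: "(\<integral>t. exp (- (s * complex_of_real t)) \<partial>M) - 1
      = integral\<^sup>L M R - s * of_real (P.expectation (\<lambda>y. y))"
    unfolding expeq using Rint sYint
    by (simp add: Bochner_Integration.integral_diff Bochner_Integration.integral_add P.prob_space[simplified])
  have nR: "norm (integral\<^sup>L M R) \<le> cmod s ^ 2 * K"
  proof -
    have "norm (integral\<^sup>L M R) \<le> integral\<^sup>L M (\<lambda>t. norm (R t))"
      by (rule integral_norm_bound)
    also have "\<dots> \<le> integral\<^sup>L M (\<lambda>t. cmod s ^ 2 * h t)"
      by (rule integral_mono) (use Rint hint Rb in auto)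
    also have "\<dots> = cmod s ^ 2 * P.expectation h" by simp
    also have "\<dots> \<le> cmod s ^ 2 * K" using Eh by (simp add: mult_left_mono)
    finally show ?thesis .
  qed
  have "cmod (s * of_real (P.expectation (\<lambda>y. y))) \<ge> cmod s * (1/(4*C))"
  proof -
    have "1/(4*C) \<le> \<bar>P.expectation (\<lambda>y. y)\<bar>" using EY by linarith
    from mult_left_mono[OF this, of "cmod s"] show ?thesis by (simp add: norm_mult)
  qed
  hence "cmod (integral\<^sup>L M R - s * of_real (P.expectation (\<lambda>y. y))) \<ge> cmod s * (1 / (4*C)) - cmod s ^ 2 * K"
    using nR norm_triangle_ineq3[of "s * of_real (P.expectation (\<lambda>y. y))" "integral\<^sup>L M R"]
    by (simp add: norm_minus_commute)
  then show ?thesis using eq unfolding M_def K_def by simp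
qed

theorem lemma8:
  fixes C lam :: real
  assumes "C > 0" and "lam > 0"
  shows "\<exists>S>0. \<exists>\<delta>>0. \<forall>f :: real \<Rightarrow> real.
           f \<in> borel_measurable borel \<and> (\<forall>t. 0 \<le> f t) \<and> (\<forall>t<0. f t = 0) \<and>
           (\<integral>\<^sup>+ t. ennreal (f t) \<partial>lborel) = 1 \<and>
           (\<forall>t\<ge>0. f t \<le> C * exp (- lam * t))
           \<longrightarrow> (\<forall>s :: complex. cmod s \<le> S \<longrightarrow>
                 cmod ((\<integral>t. exp (- (s * complex_of_real t)) \<partial>(density lborel (\<lambda>t. ennreal (f t)))) - 1)
                   \<ge> \<delta> * cmod s)"
proof -
  define K where "K = 4 * (C * (1 + 64 / lam^2)) / lam"
  define S where "S = min (lam/2) (1/(8*C*K))"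
  have K0: "K > 0" unfolding K_def using assms by (simp add: add_pos_nonneg)
  have S0: "S > 0" unfolding S_def using assms K0 by simp
  have d0: "0 < 1/(8*C)" using assms by simp
  show ?thesis
  proof (rule exI[of _ S], rule conjI[OF S0], rule exI[of _ "1/(8*C)"], rule conjI[OF d0], intro allI impI)
    fix f :: "real \<Rightarrow> real" and s :: complex
    assume H: "f \<in> borel_measurable borel \<and> (\<forall>t. 0 \<le> f t) \<and> (\<forall>t<0. f t = 0) \<and>
           (\<integral>\<^sup>+ t. ennreal (f t) \<partial>lborel) = 1 \<and> (\<forall>t\<ge>0. f t \<le> C * exp (- lam * t))"
      and sS: "cmod s \<le> S"
    have sl: "cmod s \<le> lam/2" using sS unfolding S_def by simp
    have sK: "cmod s * K \<le> 1/(8*C)"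
    proof -
      have "cmod s * K \<le> 1/(8*C*K) * K" using sS K0 unfolding S_def by (intro mult_right_mono) auto
      also have "\<dots> = 1/(8*C)" using K0 by simp
      finally show ?thesis .
    qed
    have m: "cmod ((\<integral>t. exp (- (s * complex_of_real t)) \<partial>(density lborel (\<lambda>t. ennreal (f t)))) - 1)
           \<ge> cmod s * (1 / (4*C)) - cmod s ^ 2 * K"
      unfolding K_def using main[of C lam f s] H assms sl by blast
    have "cmod s * (1 / (4*C)) - cmod s ^ 2 * K = cmod s * (1/(4*C) - cmod s * K)"
      by (simp add: power2_eq_square algebra_simps)
    also have "\<dots> \<ge> cmod s * (1/(8*C))"
      using sK by (intro mult_left_mono) auto
    finally show "1/(8*C) * cmod s \<le> cmod ((\<integral>t. exp (- (s * complex_of_real t)) \<partial>(density lborel (\<lambda>t. ennreal (f t)))) - 1)"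
      using m by (simp add: mult.commute)
  qed
qed

end
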